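(* Let $K\ge 3$, $p\in(0,1)$ and let $f\in\mathcal M_p$ with $\sigma_f$ equal to the identity. There exists $q_0\in(0,1)$, depending on $f$ (and $K,p$) but not on $M$, such that for every positive integer $M$ and every $r\in\{2,\dots,K-1\}$, running \textsc{NE} with parameter $M$ gives $$\mathbb P(\mathcal E_{r-1}\setminus\mathcal E_r)\le (K-r+1)\,q_0^M.$$
   Context: Items are $[K]=\{1,\dots,K\}$, and $\mathcal S=\{S\subseteq[K]:|S|\ge 2\}$. A preference $f$ is a family of numbers $f(i\mid S)$, $S\in\mathcal S$, $i\in[K]$. For $p\in(0,1)$, the $p$-Separable family $\mathcal M_p$ consists of all $f$ such that (i) $f(i\mid S)>0$ iff $i\in S$; (ii) $\sum_{i\in S}f(i\mid S)=1$ for all $S\in\mathcal S$; (iii) there is a bijection $\sigma_f:[K]\to[K]$ (the ranking) such that for all $S\in\mathcal S$ and $i,i'\in S$ with $\sigma_f(i')<\sigma_f(i)$, $f(i\mid S)\le p\, f(i'\mid S)$. Interaction model: at each time $t$ a display set $S_t\in\mathcal S$ is chosen based on the past, and a choice $X_t\in S_t$ is observed with conditional distribution $f(\cdot\mid S_t)$. Algorithm \textsc{NE} with parameter $M>0$: set $W_0(i)=0$ for all $i$, $S_{\mathrm{active}}=[K]$, $t=0$. While $|S_{\mathrm{active}}|>1$: $t\leftarrow t+1$; display $S_{\mathrm{active}}$, observe $X_t$; increase the score of $X_t$ by one ($W_t(X_t)=W_{t-1}(X_t)+1$, other scores unchanged); order active items as $\pi_t(1),\pi_t(2),\dots$ with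 nonincreasing scores $W_t$ (ties arbitrary); find the smallest $k<|S_{\mathrm{active}}|$ with $\sum_{i=1}^kW_t(\pi_t(i))-kW_t(\pi_t(k+1))\ge M$ and, if it exists, set $S_{\mathrm{active}}\leftarrow\{\pi_t(1),\dots,\pi_t(k)\}$. Elimination order: list the $K-1$ items removed by \textsc{NE} as $a_1,a_2,\dots,a_{K-1}$ in order of removal, where items removed at the same time step $t$ are listed from the last position of $\pi_t$ upward (i.e., the item in the lowest position first). Equivalently, the run is divided into stages $r=1,\dots,K-1$, stage $r$ being the period in which exactly $K-r+1$ items are active in this one-at-a-time description, and $a_r$ is the item removed at the end of stage $r$. For $r\in[K]$ let $\mathcal E_r=\{a_j=K-j+1\text{ for all }j\in[r-1]\}$ (so $\mathcal E_1$ is the sure event). *)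

theory Defs
  imports "HOL-Probability.Probability"
begin

text \<open>Items are 1..K.  A preference is f :: nat => nat set => real, with f i S = f(i|S).\<close>

definition display_sets :: "nat \<Rightarrow> nat set set" where
  "display_sets K = {S. S \<subseteq> {1..K} \<and> card S \<ge> 2}"

definition sep_ranking :: "nat \<Rightarrow> real \<Rightarrow> (nat \<Rightarrow> nat set \<Rightarrow> real) \<Rightarrow> (nat \<Rightarrow> nat) \<Rightarrow> bool" where
  "sep_ranking K p f \<sigma> \<longleftrightarrow> bij_betw \<sigma> {1..K} {1..K} \<and>
     (\<forall>S\<in>display_sets K. \<forall>i\<in>S. \<forall>i'\<in>S. \<sigma> i' < \<sigma> i \<longrightarrow> f i S \<le> p * f i' S)"

definition Mp :: "nat \<Rightarrow> real \<Rightarrow> (nat \<Rightarrow> nat set \<Rightarrow> real) \<Rightarrow> bool" where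
  "Mp K p f \<longleftrightarrow>
     (\<forall>S\<in>display_sets K. \<forall>i\<in>{1..K}. f i S > 0 \<longleftrightarrow> i \<in> S) \<and>
     (\<forall>S\<in>display_sets K. (\<Sum>i\<in>S. f i S) = 1) \<and>
     (\<exists>\<sigma>. sep_ranking K p f \<sigma>)"

definition choice_pmf :: "(nat \<Rightarrow> nat set \<Rightarrow> real) \<Rightarrow> nat set \<Rightarrow> nat pmf" where
  "choice_pmf f S = embed_pmf (\<lambda>i. if i \<in> S then f i S else 0)"

text \<open>Admissible tie-breaking rules: given the history of observed choices, the current
  scores W and the active set A, return an ordering of A with nonincreasing scores.\<close>
definition valid_tiebreak :: "(nat list \<Rightarrow> (nat \<Rightarrow> nat) \<Rightarrow> nat set \<Rightarrow> nat list) \<Rightarrow> bool" where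
  "valid_tiebreak tb \<longleftrightarrow> (\<forall>h W A. finite A \<longrightarrow>
     set (tb h W A) = A \<and> distinct (tb h W A) \<and> sorted_wrt (\<lambda>i j. W i \<ge> W j) (tb h W A))"

text \<open>Elimination test: smallest k < length pi with
  sum_{i=1..k} W(pi(i)) - k W(pi(k+1)) >= M (0-based list indices).\<close>
definition cut_cond :: "nat \<Rightarrow> (nat \<Rightarrow> nat) \<Rightarrow> nat list \<Rightarrow> nat \<Rightarrow> bool" where
  "cut_cond M W \<pi> k \<longleftrightarrow> 0 < k \<and> k < length \<pi> \<and>
     (\<Sum>i<k. real (W (\<pi> ! i))) - real k * real (W (\<pi> ! k)) \<ge> real M"

text \<open>State: (history of choices, scores W, active set, elimination list a_1, a_2, ...).\<close>
type_synonym ne_state = "nat list \<times> (nat \<Rightarrow> nat) \<times> nat set \<times> nat list"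

definition ne_update :: "nat \<Rightarrow> (nat list \<Rightarrow> (nat \<Rightarrow> nat) \<Rightarrow> nat set \<Rightarrow> nat list)
     \<Rightarrow> ne_state \<Rightarrow> nat \<Rightarrow> ne_state" where
  "ne_update M tb s x = (case s of (h, W, A, el) \<Rightarrow>
     (let h' = h @ [x]; W' = W(x := Suc (W x)); \<pi> = tb h' W' A in
      if \<exists>k. cut_cond M W' \<pi> k then
        (let k = (LEAST k. cut_cond M W' \<pi> k) in
          (h', W', set (take k \<pi>), el @ rev (drop k \<pi>)))
      else (h', W', A, el)))"

definition ne_step :: "(nat \<Rightarrow> nat set \<Rightarrow> real) \<Rightarrow> nat \<Rightarrow>
     (nat list \<Rightarrow> (nat \<Rightarrow> nat) \<Rightarrow> nat set \<Rightarrow> nat list) \<Rightarrow> ne_state \<Rightarrow> ne_state pmf" where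
  "ne_step f M tb s = (case s of (h, W, A, el) \<Rightarrow>
     if card A \<le> 1 then return_pmf s
     else map_pmf (ne_update M tb s) (choice_pmf f A))"

fun ne_run :: "nat \<Rightarrow> (nat \<Rightarrow> nat set \<Rightarrow> real) \<Rightarrow> nat \<Rightarrow>
     (nat list \<Rightarrow> (nat \<Rightarrow> nat) \<Rightarrow> nat set \<Rightarrow> nat list) \<Rightarrow> nat \<Rightarrow> ne_state pmf" where
  "ne_run K f M tb 0 = return_pmf ([], (\<lambda>_. 0), {1..K}, [])"
| "ne_run K f M tb (Suc T) = bind_pmf (ne_run K f M tb T) (ne_step f M tb)"

text \<open>The event E_{r-1} minus E_r, in terms of the elimination list el = [a_1, a_2, ...]:
  a_j = K-j+1 for j \<le> r-2 and a_{r-1} \<noteq> K-r+2 (a_{r-1} having occurred).\<close>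
definition bad_event :: "nat \<Rightarrow> nat \<Rightarrow> nat list \<Rightarrow> bool" where
  "bad_event K r el \<longleftrightarrow> r - 1 \<le> length el \<and>
     (\<forall>j\<in>{1..r-2}. el ! (j - 1) = K - j + 1) \<and> el ! (r - 2) \<noteq> K - r + 2"

end

theory Submission
  imports Defs
begin

definition prec :: "nat \<Rightarrow> nat \<Rightarrow> nat list \<Rightarrow> bool" where
  "prec j n el \<longleftrightarrow> (\<exists>a b. el = a @ j # b \<and> j \<notin> set a \<and> n \<notin> set a \<and> n \<noteq> j)"

lemma app_split:
  assumes "el @ ys = a @ j # b" "j \<notin> set el"
  shows "\<exists>a'. a = el @ a' \<and> ys = a' @ j # b"
proof -
  from assms(1) obtain us where "el = a @ us \<and> us @ ys = j # b \<or> el @ us = a \<and> ys = us @ j # b"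
    by (auto simp: append_eq_append_conv2)
  then show ?thesis
  proof
    assume h: "el = a @ us \<and> us @ ys = j # b"
    show ?thesis
    proof (cases us)
      case Nil then show ?thesis using h by auto
    next
      case (Cons u us') then show ?thesis using h assms(2) by auto
    qed
  qed auto
qed

lemma first_split_unique:
  assumes "u @ j # v = a @ j # b" "j \<notin> set u" "j \<notin> set a"
  shows "a = u"
  using assms
proof (induction u arbitrary: a)
  case Nil
  then show ?case by (cases a) auto
next
  case (Cons y u)
  then show ?case by (cases a) auto
qed

lemma prec_app_mono: "prec j n el \<Longrightarrow> prec j n (el @ m)"
  unfolding prec_def by (metis append_Cons append_assoc)

definition Inv :: "nat \<Rightarrow> ne_state \<Rightarrow> bool" where
  "Inv K s \<longleftrightarrow> (case s of (h, W, A, el) \<Rightarrow> A \<inter> set el = {} \<and> A \<union> set el = {1..K} \<and>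
     distinct el \<and> (\<forall>B. finite B \<longrightarrow> sum W B \<le> length h))"

lemma prec_app_back:
  assumes "prec j n (el @ m)" "j \<in> set el \<or> n \<in> set el"
  shows "prec j n el"
proof -
  obtain a b where ab: "el @ m = a @ j # b" "j \<notin> set a" "n \<notin> set a" "n \<noteq> j"
    using assms(1) unfolding prec_def by blast
  show ?thesis
  proof (cases "j \<in> set el")
    case True
    then obtain u v where uv: "el = u @ j # v" "j \<notin> set u" by (metis split_list_first)
    have "u @ j # (v @ m) = a @ j # b" using ab uv by simp
    then have "a = u" using first_split_unique[of u j "v @ m" a b] uv ab by simp
    then show ?thesis unfolding prec_def using uv ab by auto
  next
    case False
    then obtain a' where "a = el @ a'" using app_split[OF ab(1) False] by blast
    then show ?thesis using assms(2) False ab by simp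
  qed
qed

lemma sum_upd:
  assumes "finite B"
  shows "sum (W(x := Suc (W x))) B = sum W B + (if x \<in> B then 1 else 0)"
proof (cases "x \<in> B")
  case True
  have "sum (W(x := Suc (W x))) B = (W(x := Suc (W x))) x + sum (W(x := Suc (W x))) (B - {x})"
    using True assms by (simp add: sum.remove)
  also have "sum (W(x := Suc (W x))) (B - {x}) = sum W (B - {x})"
    by (rule sum.cong) auto
  finally have "sum (W(x := Suc (W x))) B = Suc (W x) + sum W (B - {x})" by simp
  also have "W x + sum W (B - {x}) = sum W B" using True assms by (simp add: sum.remove)
  ultimately show ?thesis using True by simp
next
  case False
  have "sum (W(x := Suc (W x))) B = sum W B"
    by (rule sum.cong) (use False in auto)
  then show ?thesis using False by simp
qed

lemma Inv_update:
  assumes inv: "Inv K (h, W, A, el)" and tb: "valid_tiebreak tb"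
  shows "Inv K (ne_update M tb (h, W, A, el) i)"
proof -
  define h' where "h' = h @ [i]"
  define W' where "W' = W(i := Suc (W i))"
  define \<pi> where "\<pi> = tb h' W' A"
  have I: "A \<inter> set el = {}" "A \<union> set el = {1..K}" "distinct el"
     "\<forall>B. finite B \<longrightarrow> sum W B \<le> length h" using inv unfolding Inv_def by auto
  have finA: "finite A" using I(2) by (metis finite_Un finite_atLeastAtMost)
  have \<pi>: "set \<pi> = A" "distinct \<pi>" using tb finA unfolding valid_tiebreak_def \<pi>_def by auto
  have sumW': "\<forall>B. finite B \<longrightarrow> sum W' B \<le> length h'"
  proof (intro allI impI)
    fix B :: "nat set" assume "finite B"
    then show "sum W' B \<le> length h'" using I(4) sum_upd[of B W i]
      unfolding W'_def h'_def by auto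
  qed
  define k where "k = (LEAST k. cut_cond M W' \<pi> k)"
  have upd: "ne_update M tb (h, W, A, el) i = (if \<exists>k. cut_cond M W' \<pi> k
      then (h', W', set (take k \<pi>), el @ rev (drop k \<pi>)) else (h', W', A, el))"
    unfolding ne_update_def h'_def W'_def \<pi>_def k_def Let_def by simp
  show ?thesis
  proof (cases "\<exists>k. cut_cond M W' \<pi> k")
    case False
    have eq: "ne_update M tb (h, W, A, el) i = (h', W', A, el)"
      using False upd by simp
    show ?thesis unfolding eq Inv_def using I sumW' by simp
  next
    case True
    have eq: "ne_update M tb (h, W, A, el) i = (h', W', set (take k \<pi>), el @ rev (drop k \<pi>))"
      using True upd by simp
    have d: "set (take k \<pi>) \<inter> set (drop k \<pi>) = {}"
      using \<pi>(2) by (metis distinct_append append_take_drop_id)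
    have u: "set (take k \<pi>) \<union> set (drop k \<pi>) = A"
      using \<pi>(1) by (metis set_append append_take_drop_id)
    have dd: "distinct (drop k \<pi>)" using \<pi>(2) by simp
    have "set (take k \<pi>) \<inter> set (el @ rev (drop k \<pi>)) = {}" using d u I(1) by auto
    moreover have "set (take k \<pi>) \<union> set (el @ rev (drop k \<pi>)) = {1..K}" using u I(2) by auto
    moreover have "distinct (el @ rev (drop k \<pi>))" using dd I(3) I(1) u by auto
    ultimately show ?thesis unfolding eq Inv_def using sumW' by simp
  qed
qed

definition Phi :: "real \<Rightarrow> real \<Rightarrow> nat \<Rightarrow> nat \<Rightarrow> nat \<Rightarrow> nat list \<Rightarrow> (nat \<Rightarrow> nat) \<Rightarrow> real" where
  "Phi x \<rho> M j n h W = x ^ W j * (1 / x) ^ W n * \<rho> ^ (M - length h)"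

definition Psi :: "real \<Rightarrow> real \<Rightarrow> nat \<Rightarrow> nat \<Rightarrow> nat \<Rightarrow> ne_state \<Rightarrow> real" where
  "Psi x \<rho> M j n s = (case s of (h, W, A, el) \<Rightarrow>
     (if prec j n el then 1 else 0) + (if j \<in> A \<and> n \<in> A then Phi x \<rho> M j n h W else 0))"

lemma Phi_nonneg: "0 < x \<Longrightarrow> 0 \<le> \<rho> \<Longrightarrow> 0 \<le> Phi x \<rho> M j n h W"
  unfolding Phi_def by simp

lemma pow_ge1:
  fixes x :: real and a b :: nat
  assumes "0 < x" "x \<le> 1" "a \<le> b"
  shows "1 \<le> x ^ a * (1 / x) ^ b"
proof -
  have b: "b = a + (b - a)" using assms(3) by simp
  have "(1 / x) ^ b = (1/x) ^ (a + (b - a))" using b by simp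
  also have "\<dots> = (1/x) ^ a * (1/x) ^ (b - a)" by (rule power_add)
  finally have "(1 / x) ^ b = (1/x) ^ a * (1/x) ^ (b - a)" .
  then have eb: "x ^ a * (1 / x) ^ b = (x ^ a * (1/x) ^ a) * (1/x) ^ (b - a)"
    by (simp only: mult.assoc)
  have "x * (1/x) = 1" using assms(1) by simp
  then have e: "x ^ a * (1/x) ^ a = 1" by (metis power_mult_distrib power_one)
  have "x ^ a * (1 / x) ^ b = (1/x) ^ (b - a)" using eb e by simp
  also have "1 \<le> \<dots>" using assms by (simp add: one_le_power)
  finally show ?thesis by simp
qed

lemma Psi_nonneg: "0 < x \<Longrightarrow> 0 \<le> \<rho> \<Longrightarrow> 0 \<le> Psi x \<rho> M j n s"
  unfolding Psi_def using Phi_nonneg by (auto split: prod.splits)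

lemma key_update:
  assumes inv: "Inv K (h, W, A, el)" and tb: "valid_tiebreak tb"
    and jn: "j \<in> A" "n \<in> A" "j \<noteq> n" and x: "0 < x" "x \<le> 1" and r: "0 \<le> \<rho>"
  shows "Psi x \<rho> M j n (ne_update M tb (h, W, A, el) i) \<le> Phi x \<rho> M j n (h @ [i]) (W(i := Suc (W i)))"
proof -
  define h' where "h' = h @ [i]"
  define W' where "W' = W(i := Suc (W i))"
  define \<pi> where "\<pi> = tb h' W' A"
  have I: "A \<inter> set el = {}" "A \<union> set el = {1..K}" "distinct el"
     "\<forall>B. finite B \<longrightarrow> sum W B \<le> length h" using inv unfolding Inv_def by auto
  have finA: "finite A" using I(2) by (metis finite_Un finite_atLeastAtMost)
  have \<pi>: "set \<pi> = A" "distinct \<pi>" "sorted_wrt (\<lambda>i j. W' i \<ge> W' j) \<pi>"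
    using tb finA unfolding valid_tiebreak_def \<pi>_def by auto
  have sumW': "\<And>B. finite B \<Longrightarrow> sum W' B \<le> length h'"
  proof -
    fix B :: "nat set" assume "finite B"
    then show "sum W' B \<le> length h'" using I(4) sum_upd[of B W i]
      unfolding W'_def h'_def by auto
  qed
  have jel: "j \<notin> set el" using jn I(1) by auto
  define k where "k = (LEAST k. cut_cond M W' \<pi> k)"
  have upd: "ne_update M tb (h, W, A, el) i = (if \<exists>k. cut_cond M W' \<pi> k
      then (h', W', set (take k \<pi>), el @ rev (drop k \<pi>)) else (h', W', A, el))"
    unfolding ne_update_def h'_def W'_def \<pi>_def k_def Let_def by simp
  have pn: "\<not> prec j n el" using jel unfolding prec_def by auto
  have Pnn: "0 \<le> Phi x \<rho> M j n h' W'" using Phi_nonneg x r by blast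
  show ?thesis
  proof (cases "\<exists>k. cut_cond M W' \<pi> k")
    case False
    have eq: "ne_update M tb (h, W, A, el) i = (h', W', A, el)"
      using False upd by simp
    show ?thesis unfolding eq Psi_def using pn jn by (simp add: h'_def W'_def)
  next
    case True
    have eq: "ne_update M tb (h, W, A, el) i = (h', W', set (take k \<pi>), el @ rev (drop k \<pi>))"
      using True upd by simp
    have cc: "cut_cond M W' \<pi> k" unfolding k_def using True by (rule LeastI_ex)
    have kl: "k < length \<pi>" using cc unfolding cut_cond_def by simp
    have d: "set (take k \<pi>) \<inter> set (drop k \<pi>) = {}"
      using \<pi>(2) by (metis distinct_append append_take_drop_id)
    show ?thesis
    proof (cases "prec j n (el @ rev (drop k \<pi>))")
      case False
      have "Psi x \<rho> M j n (h', W', set (take k \<pi>), el @ rev (drop k \<pi>)) \<le> Phi x \<rho> M j n h' W'"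
        unfolding Psi_def using False Pnn by simp
      then show ?thesis unfolding eq by (simp add: h'_def W'_def)
    next
      case P: True
      obtain a b where ab: "el @ rev (drop k \<pi>) = a @ j # b" "n \<notin> set a"
        using P unfolding prec_def by blast
      obtain a' where a': "a = el @ a'" "rev (drop k \<pi>) = a' @ j # b"
        using app_split[OF ab(1) jel] by blast
      have jd: "j \<in> set (drop k \<pi>)" using a'(2) by (metis in_set_conv_decomp set_rev)
      have "rev \<pi> = a' @ j # (b @ rev (take k \<pi>))"
        using a'(2) by (metis append_take_drop_id rev_append append_assoc append_Cons)
      moreover have "sorted_wrt (\<lambda>u v. W' u \<le> W' v) (rev \<pi>)"
        using \<pi>(3) by (simp add: sorted_wrt_rev)
      ultimately have srt: "\<forall>v\<in>set (b @ rev (take k \<pi>)). W' j \<le> W' v"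
        by (simp add: sorted_wrt_append)
      have "n \<in> set (rev \<pi>)" using jn \<pi>(1) by simp
      then have "n \<in> set (b @ rev (take k \<pi>))"
        using \<open>rev \<pi> = _\<close> ab(2) a'(1) jn(3) by auto
      then have Wjn: "W' j \<le> W' n" using srt by blast
      have "0 \<le> real k * real (W' (\<pi> ! k))" by simp
      then have "real M \<le> (\<Sum>i<k. real (W' (\<pi> ! i)))" using cc unfolding cut_cond_def by linarith
      also have "(\<Sum>i<k. real (W' (\<pi> ! i))) = real (sum W' (set (take k \<pi>)))"
      proof -
        have "set (take k \<pi>) = (!) \<pi> ` {..<k}" using kl by (simp add: nth_image lessThan_atLeast0)
        moreover have "inj_on ((!) \<pi>) {..<k}" using \<pi>(2) kl by (simp add: inj_on_nth)
        ultimately show ?thesis by (simp add: sum.reindex)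
      qed
      also have "\<dots> \<le> real (length h')" by (metis of_nat_le_iff sumW' finite_set)
      finally have Mh: "M \<le> length h'" by simp
      have "1 \<le> Phi x \<rho> M j n h' W'"
        unfolding Phi_def using Mh pow_ge1[OF x Wjn] by simp
      moreover have "Psi x \<rho> M j n (h', W', set (take k \<pi>), el @ rev (drop k \<pi>)) \<le> 1"
        unfolding Psi_def using P jd d by auto
      ultimately show ?thesis unfolding eq by (simp add: h'_def W'_def)
    qed
  qed
qed

lemma other_update:
  assumes inv: "Inv K (h, W, A, el)" and tb: "valid_tiebreak tb"
    and nb: "\<not> (j \<in> A \<and> n \<in> A)" and jn: "j \<in> {1..K}" "n \<in> {1..K}"
  shows "Psi x \<rho> M j n (ne_update M tb (h, W, A, el) i) \<le> Psi x \<rho> M j n (h, W, A, el)"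
proof -
  define h' where "h' = h @ [i]"
  define W' where "W' = W(i := Suc (W i))"
  define \<pi> where "\<pi> = tb h' W' A"
  have I: "A \<inter> set el = {}" "A \<union> set el = {1..K}" "distinct el"
     "\<forall>B. finite B \<longrightarrow> sum W B \<le> length h" using inv unfolding Inv_def by auto
  have finA: "finite A" using I(2) by (metis finite_Un finite_atLeastAtMost)
  have \<pi>: "set \<pi> = A" using tb finA unfolding valid_tiebreak_def \<pi>_def by auto
  have inel: "j \<in> set el \<or> n \<in> set el" using nb jn I(2) by auto
  define k where "k = (LEAST k. cut_cond M W' \<pi> k)"
  have upd: "ne_update M tb (h, W, A, el) i = (if \<exists>k. cut_cond M W' \<pi> k
      then (h', W', set (take k \<pi>), el @ rev (drop k \<pi>)) else (h', W', A, el))"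
    unfolding ne_update_def h'_def W'_def \<pi>_def k_def Let_def by simp
  show ?thesis
  proof (cases "\<exists>k. cut_cond M W' \<pi> k")
    case False
    have eq: "ne_update M tb (h, W, A, el) i = (h', W', A, el)"
      using False upd by simp
    show ?thesis unfolding eq Psi_def using nb by auto
  next
    case True
    have eq: "ne_update M tb (h, W, A, el) i = (h', W', set (take k \<pi>), el @ rev (drop k \<pi>))"
      using True upd by simp
    have sub: "set (take k \<pi>) \<subseteq> A" using \<pi> by (metis set_take_subset)
    have "prec j n (el @ rev (drop k \<pi>)) \<Longrightarrow> prec j n el" using prec_app_back inel by blast
    then show ?thesis unfolding eq Psi_def using nb sub by auto
  qed
qed

lemma pmf_choice:
  assumes "A \<in> display_sets K" "\<forall>i\<in>{1..K}. f i A > 0 \<longleftrightarrow> i \<in> A" "(\<Sum>i\<in>A. f i A) = 1"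
  shows "pmf (choice_pmf f A) i = (if i \<in> A then f i A else 0)"
proof -
  have AK: "A \<subseteq> {1..K}" and finA: "finite A" using assms(1) unfolding display_sets_def
    by (auto intro: finite_subset)
  have nn: "\<And>i. 0 \<le> (if i \<in> A then f i A else 0)" using assms(2) AK by (auto intro: less_imp_le)
  have "(\<integral>\<^sup>+i. ennreal (if i \<in> A then f i A else 0) \<partial>count_space UNIV) = (\<Sum>i\<in>A. ennreal (if i \<in> A then f i A else 0))"
    by (rule nn_integral_count_space'[OF finA]) auto
  also have "\<dots> = ennreal (\<Sum>i\<in>A. (if i \<in> A then f i A else 0))"
    using nn by (rule sum_ennreal)
  also have "\<dots> = 1" using assms(3) by simp
  finally have tot: "(\<integral>\<^sup>+i. ennreal (if i \<in> A then f i A else 0) \<partial>count_space UNIV) = 1" .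
  show ?thesis unfolding choice_pmf_def
    by (rule pmf_embed_pmf[of "\<lambda>i. if i \<in> A then f i A else 0", OF nn tot])
qed

lemma sum_calc:
  fixes x r :: real
  assumes "finite A" "j \<in> A" "n \<in> A" "j \<noteq> n"
  shows "(\<Sum>i\<in>A. g i * (x ^ ((W(i := Suc (W i))) j) * (1/x) ^ ((W(i := Suc (W i))) n) * r))
       = x ^ W j * (1/x) ^ W n * r * ((\<Sum>i\<in>A. g i) + g j * (x - 1) + g n * (1/x - 1))"
proof -
  have pt: "g i * (x ^ ((W(i := Suc (W i))) j) * (1/x) ^ ((W(i := Suc (W i))) n) * r)
     = x ^ W j * (1/x) ^ W n * r * (g i + (if i = j then g i * (x - 1) else 0) + (if i = n then g i * (1/x - 1) else 0))"
    for i
  proof (cases "i = j")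
    case True
    then show ?thesis using assms(4) by (simp add: algebra_simps)
  next
    case False
    then show ?thesis by (cases "i = n") (simp_all add: algebra_simps)
  qed
  have "(\<Sum>i\<in>A. g i * (x ^ ((W(i := Suc (W i))) j) * (1/x) ^ ((W(i := Suc (W i))) n) * r))
     = x ^ W j * (1/x) ^ W n * r * (\<Sum>i\<in>A. g i + (if i = j then g i * (x - 1) else 0) + (if i = n then g i * (1/x - 1) else 0))"
    unfolding pt by (simp add: sum_distrib_left)
  also have "(\<Sum>i\<in>A. g i + (if i = j then g i * (x - 1) else 0) + (if i = n then g i * (1/x - 1) else 0))
      = (\<Sum>i\<in>A. g i) + g j * (x - 1) + g n * (1/x - 1)"
    using assms by (simp add: sum.distrib sum.delta)
  finally show ?thesis .
qed

lemma step_le: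
  assumes inv: "Inv K s" and tb: "valid_tiebreak tb"
    and jn: "j \<in> {1..K}" "n \<in> {1..K}" "j < n"
    and x: "0 < x" "x \<le> 1" and r: "0 \<le> \<rho>" "\<rho> \<le> 1"
    and sum1: "\<forall>S\<in>display_sets K. (\<Sum>i\<in>S. f i S) = 1"
    and pos: "\<forall>S\<in>display_sets K. \<forall>i\<in>{1..K}. f i S > 0 \<longleftrightarrow> i \<in> S"
    and stepb: "\<forall>A\<in>display_sets K. \<forall>j\<in>A. \<forall>n\<in>A. j < n \<longrightarrow>
                  1 - f j A * (1 - x) + f n A * (1 / x - 1) \<le> \<rho>"
  shows "(\<integral>\<^sup>+t. ennreal (Psi x \<rho> M j n t) \<partial>ne_step f M tb s) \<le> ennreal (Psi x \<rho> M j n s)"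
proof -
  obtain h W A el where s: "s = (h, W, A, el)" by (cases s) auto
  have I: "A \<inter> set el = {}" "A \<union> set el = {1..K}" "distinct el"
     "\<forall>B. finite B \<longrightarrow> sum W B \<le> length h" using inv unfolding Inv_def s by auto
  have finA: "finite A" using I(2) by (metis finite_Un finite_atLeastAtMost)
  show ?thesis
  proof (cases "card A \<le> 1")
    case True
    then have "ne_step f M tb s = return_pmf s" unfolding ne_step_def s by simp
    then show ?thesis by simp
  next
    case False
    then have st: "ne_step f M tb s = map_pmf (ne_update M tb s) (choice_pmf f A)"
      unfolding ne_step_def s by simp
    have AD: "A \<in> display_sets K" unfolding display_sets_def using False I(2) by auto
    have pmfc: "\<And>i. pmf (choice_pmf f A) i = (if i \<in> A then f i A else 0)"
      using pmf_choice[OF AD] pos sum1 AD by blast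
    show ?thesis
    proof (cases "j \<in> A \<and> n \<in> A")
      case both: True
      define Ph where "Ph i = Phi x \<rho> M j n (h @ [i]) (W(i := Suc (W i)))" for i
      have "(\<integral>\<^sup>+t. ennreal (Psi x \<rho> M j n t) \<partial>ne_step f M tb s)
          = (\<integral>\<^sup>+i. ennreal (Psi x \<rho> M j n (ne_update M tb s i)) \<partial>choice_pmf f A)"
        unfolding st by simp
      also have "\<dots> \<le> (\<integral>\<^sup>+i. ennreal (Ph i) \<partial>choice_pmf f A)"
        apply (rule nn_integral_mono)
        apply (rule ennreal_leI)
        unfolding s Ph_def
        apply (rule key_update[OF inv[unfolded s] tb])
        using both jn x r by auto
      also have "\<dots> = (\<Sum>i\<in>A. ennreal (Ph i) * pmf (choice_pmf f A) i)"
        by (rule nn_integral_measure_pmf_support[OF finA]) (auto simp: set_pmf_iff pmfc)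
      also have "\<dots> = (\<Sum>i\<in>A. ennreal (f i A * Ph i))"
      proof (rule sum.cong)
        fix i assume "i \<in> A"
        moreover have "0 \<le> Ph i" unfolding Ph_def using Phi_nonneg x r by blast
        moreover have "0 \<le> f i A" using pos AD \<open>i \<in> A\<close> I(2) by (auto intro: less_imp_le)
        ultimately show "ennreal (Ph i) * ennreal (pmf (choice_pmf f A) i) = ennreal (f i A * Ph i)"
          by (simp add: pmfc ennreal_mult mult.commute)
      qed simp
      also have "\<dots> = ennreal (\<Sum>i\<in>A. f i A * Ph i)"
      proof (rule sum_ennreal)
        fix i assume "i \<in> A"
        moreover have "0 \<le> Ph i" unfolding Ph_def using Phi_nonneg x r by blast
        moreover have "0 \<le> f i A" using pos AD \<open>i \<in> A\<close> I(2) by (auto intro: less_imp_le)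
        ultimately show "0 \<le> f i A * Ph i" by simp
      qed
      also have "\<dots> \<le> ennreal (Psi x \<rho> M j n s)"
      proof (rule ennreal_leI)
        define C where "C = x ^ W j * (1/x) ^ W n"
        define R where "R = \<rho> ^ (M - Suc (length h))"
        have C0: "0 \<le> C" "0 \<le> R" unfolding C_def R_def using x r by auto
        have "(\<Sum>i\<in>A. f i A * Ph i) = (\<Sum>i\<in>A. f i A * (x ^ ((W(i := Suc (W i))) j) * (1/x) ^ ((W(i := Suc (W i))) n) * R))"
          unfolding Ph_def Phi_def R_def by simp
        also have "\<dots> = C * R * ((\<Sum>i\<in>A. f i A) + f j A * (x - 1) + f n A * (1/x - 1))"
          unfolding C_def using sum_calc[OF finA, of j n "\<lambda>i. f i A" x W R] both jn by simp
        also have "(\<Sum>i\<in>A. f i A) + f j A * (x - 1) + f n A * (1/x - 1) \<le> \<rho>"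
          using stepb AD both jn sum1 by (auto simp: algebra_simps)
        then have "C * R * ((\<Sum>i\<in>A. f i A) + f j A * (x - 1) + f n A * (1/x - 1)) \<le> C * R * \<rho>"
          using C0 by (simp add: mult_left_mono)
        also have "C * R * \<rho> \<le> C * \<rho> ^ (M - length h)"
        proof -
          have "R * \<rho> = \<rho> ^ Suc (M - Suc (length h))" unfolding R_def by (simp add: mult.commute)
          also have "\<dots> \<le> \<rho> ^ (M - length h)" by (rule power_decreasing) (use r in auto)
          finally show ?thesis using C0 by (simp add: mult_left_mono mult.assoc)
        qed
        also have "C * \<rho> ^ (M - length h) = Psi x \<rho> M j n s"
          unfolding Psi_def Phi_def C_def s using both I(1) by (auto simp: prec_def)
        finally show "(\<Sum>i\<in>A. f i A * Ph i) \<le> Psi x \<rho> M j n s" .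
      qed
      finally show ?thesis .
    next
      case nb: False
      have "(\<integral>\<^sup>+t. ennreal (Psi x \<rho> M j n t) \<partial>ne_step f M tb s)
          = (\<integral>\<^sup>+i. ennreal (Psi x \<rho> M j n (ne_update M tb s i)) \<partial>choice_pmf f A)"
        unfolding st by simp
      also have "\<dots> \<le> (\<integral>\<^sup>+i. ennreal (Psi x \<rho> M j n s) \<partial>choice_pmf f A)"
        apply (rule nn_integral_mono)
        apply (rule ennreal_leI)
        unfolding s
        apply (rule other_update[OF inv[unfolded s] tb nb])
        using jn by auto
      also have "\<dots> = ennreal (Psi x \<rho> M j n s)"
        by (simp add: measure_pmf.emeasure_space_1)
      finally show ?thesis .
    qed
  qed
qed

lemma Inv_init: "Inv K ([], (\<lambda>_. 0), {1..K}, [])"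
  unfolding Inv_def by simp

lemma Inv_run:
  assumes tb: "valid_tiebreak tb"
  shows "s \<in> set_pmf (ne_run K f M tb T) \<Longrightarrow> Inv K s"
proof (induction T arbitrary: s)
  case 0
  then show ?case using Inv_init by simp
next
  case (Suc T)
  then obtain s0 where s0: "s0 \<in> set_pmf (ne_run K f M tb T)" "s \<in> set_pmf (ne_step f M tb s0)"
    by auto
  have I0: "Inv K s0" using Suc.IH s0(1) .
  obtain h W A el where e: "s0 = (h, W, A, el)" by (cases s0) auto
  show ?case
  proof (cases "card A \<le> 1")
    case True
    then show ?thesis using s0(2) I0 unfolding ne_step_def e by simp
  next
    case False
    then obtain i where "s = ne_update M tb s0 i" using s0(2) unfolding ne_step_def e by auto
    then show ?thesis using Inv_update[OF I0[unfolded e] tb] e by simp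
  qed
qed

lemma run_le:
  assumes tb: "valid_tiebreak tb"
    and jn: "j \<in> {1..K}" "n \<in> {1..K}" "j < n"
    and x: "0 < x" "x \<le> 1" and r: "0 \<le> \<rho>" "\<rho> \<le> 1"
    and sum1: "\<forall>S\<in>display_sets K. (\<Sum>i\<in>S. f i S) = 1"
    and pos: "\<forall>S\<in>display_sets K. \<forall>i\<in>{1..K}. f i S > 0 \<longleftrightarrow> i \<in> S"
    and stepb: "\<forall>A\<in>display_sets K. \<forall>j\<in>A. \<forall>n\<in>A. j < n \<longrightarrow>
                  1 - f j A * (1 - x) + f n A * (1 / x - 1) \<le> \<rho>"
  shows "(\<integral>\<^sup>+t. ennreal (Psi x \<rho> M j n t) \<partial>ne_run K f M tb T) \<le> ennreal (\<rho> ^ M)"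
proof (induction T)
  case 0
  have "\<not> prec j n []" unfolding prec_def by simp
  then show ?case using jn by (simp add: Psi_def Phi_def)
next
  case (Suc T)
  have "(\<integral>\<^sup>+t. ennreal (Psi x \<rho> M j n t) \<partial>ne_run K f M tb (Suc T))
      = (\<integral>\<^sup>+s. (\<integral>\<^sup>+t. ennreal (Psi x \<rho> M j n t) \<partial>ne_step f M tb s) \<partial>ne_run K f M tb T)"
    by simp
  also have "\<dots> \<le> (\<integral>\<^sup>+s. ennreal (Psi x \<rho> M j n s) \<partial>ne_run K f M tb T)"
  proof (rule nn_integral_mono_AE, rule AE_pmfI)
    fix s assume "s \<in> set_pmf (ne_run K f M tb T)"
    then have "Inv K s" using Inv_run[OF tb] by blast
    then show "(\<integral>\<^sup>+t. ennreal (Psi x \<rho> M j n t) \<partial>ne_step f M tb s) \<le> ennreal (Psi x \<rho> M j n s)"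
      by (rule step_le[OF _ tb jn x r sum1 pos stepb])
  qed
  also have "\<dots> \<le> ennreal (\<rho> ^ M)" by (rule Suc.IH)
  finally show ?case .
qed

lemma prob_prec_le:
  assumes tb: "valid_tiebreak tb"
    and jn: "j \<in> {1..K}" "n \<in> {1..K}" "j < n"
    and x: "0 < x" "x \<le> 1" and r: "0 \<le> \<rho>" "\<rho> \<le> 1"
    and sum1: "\<forall>S\<in>display_sets K. (\<Sum>i\<in>S. f i S) = 1"
    and pos: "\<forall>S\<in>display_sets K. \<forall>i\<in>{1..K}. f i S > 0 \<longleftrightarrow> i \<in> S"
    and stepb: "\<forall>A\<in>display_sets K. \<forall>j\<in>A. \<forall>n\<in>A. j < n \<longrightarrow>
                  1 - f j A * (1 - x) + f n A * (1 / x - 1) \<le> \<rho>"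
  shows "measure_pmf.prob (ne_run K f M tb T) {s. prec j n (snd (snd (snd s)))} \<le> \<rho> ^ M"
proof -
  let ?P = "ne_run K f M tb T"
  let ?E = "{s. prec j n (snd (snd (snd s)))}"
  have "ennreal (measure_pmf.prob ?P ?E) = emeasure (measure_pmf ?P) ?E"
    by (simp add: measure_pmf.emeasure_eq_measure)
  also have "\<dots> = (\<integral>\<^sup>+t. indicator ?E t \<partial>?P)" by simp
  also have "\<dots> \<le> (\<integral>\<^sup>+t. ennreal (Psi x \<rho> M j n t) \<partial>?P)"
  proof (rule nn_integral_mono)
    fix t :: ne_state
    obtain h W A el where e: "t = (h, W, A, el)" by (cases t) auto
    have "0 \<le> Phi x \<rho> M j n h W" using Phi_nonneg x r by blast
    then have "indicator ?E t \<le> (Psi x \<rho> M j n t)" unfolding e Psi_def by (auto split: split_indicator)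
    then show "indicator ?E t \<le> ennreal (Psi x \<rho> M j n t)"
      by (auto split: split_indicator)
  qed
  also have "\<dots> \<le> ennreal (\<rho> ^ M)" by (rule run_le[OF tb jn x r sum1 pos stepb])
  finally show ?thesis using r by (simp add: ennreal_le_iff)
qed

lemma bad_prec:
  assumes r: "r \<in> {2..K-1}" and K: "K \<ge> 3" and d: "distinct el" and sub: "set el \<subseteq> {1..K}"
    and bad: "bad_event K r el"
  shows "\<exists>a\<in>{1..K-r+1}. prec a (K-r+2) el"
proof -
  define m where "m = r - 2"
  define n where "n = K - r + 2"
  have mK: "m + 3 \<le> K" "n = K - m" using r unfolding m_def n_def by auto
  have len: "m < length el" using bad r unfolding bad_event_def m_def by auto
  have pre: "\<And>i. i < m \<Longrightarrow> el ! i = K - i"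
  proof -
    fix i assume "i < m"
    then have "Suc i \<in> {1..r-2}" unfolding m_def by auto
    then have "el ! (Suc i - 1) = K - Suc i + 1" using bad unfolding bad_event_def by blast
    then show "el ! i = K - i" using \<open>i < m\<close> mK by simp
  qed
  define a where "a = el ! m"
  have an: "a \<noteq> n" using bad unfolding bad_event_def a_def m_def n_def by simp
  have tk: "\<And>y. y \<in> set (take m el) \<Longrightarrow> y > n"
  proof -
    fix y assume "y \<in> set (take m el)"
    then obtain i where "i < length (take m el)" "take m el ! i = y" by (metis in_set_conv_nth)
    then have "i < m" "el ! i = y" by auto
    then show "y > n" using pre mK by auto
  qed
  have ant: "a \<notin> set (take m el)"
  proof
    assume "a \<in> set (take m el)"
    then obtain i where "i < length (take m el)" "take m el ! i = a" by (metis in_set_conv_nth)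
    then have "i < m" "el ! i = el ! m" unfolding a_def by auto
    then show False using d len nth_eq_iff_index_eq by fastforce
  qed
  have "a \<in> set el" unfolding a_def using len by simp
  then have a1: "1 \<le> a" "a \<le> K" using sub by auto
  have "a \<le> n"
  proof (rule ccontr)
    assume "\<not> a \<le> n"
    then have "a \<in> {n+1..K}" using a1 by simp
    define i where "i = K - a"
    have i: "i < m" "a = K - i" using \<open>a \<in> {n+1..K}\<close> mK unfolding i_def by auto
    then have "el ! i = a" using pre by simp
    moreover have "take m el ! i = el ! i" using i by simp
    moreover have "i < length (take m el)" using i len by simp
    ultimately have "a \<in> set (take m el)" by (metis nth_mem)
    then show False using ant by simp
  qed
  then have aR: "a \<in> {1..K-r+1}" using an a1 unfolding n_def by auto
  have "el = take m el @ a # drop (Suc m) el" unfolding a_def using len by (simp add: id_take_nth_drop)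
  moreover have "n \<notin> set (take m el)" using tk by blast
  ultimately have "prec a n el" unfolding prec_def using ant an by metis
  then show ?thesis using aR unfolding n_def by blast
qed

theorem mainTheorem4:
  fixes K :: nat and p :: real and f :: "nat \<Rightarrow> nat set \<Rightarrow> real"
  assumes "K \<ge> 3" and "0 < p" and "p < 1"
    and "Mp K p f" and "sep_ranking K p f id"
  shows "\<exists>q0::real. 0 < q0 \<and> q0 < 1 \<and>
    (\<forall>M::nat. M > 0 \<longrightarrow> (\<forall>tb. valid_tiebreak tb \<longrightarrow>
       (\<forall>r\<in>{2..K-1}. \<forall>T.
          measure_pmf.prob (ne_run K f M tb T) {s. bad_event K r (snd (snd (snd s)))}
            \<le> real (K - r + 1) * q0 ^ M)))"
proof -
  have K3: "K \<ge> 3" and p0: "0 < p" and p1: "p < 1" using assms by auto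
  have pos: "\<forall>S\<in>display_sets K. \<forall>i\<in>{1..K}. f i S > 0 \<longleftrightarrow> i \<in> S"
    and sum1: "\<forall>S\<in>display_sets K. (\<Sum>i\<in>S. f i S) = 1"
    using assms(4) unfolding Mp_def by auto
  have sep: "\<forall>S\<in>display_sets K. \<forall>i\<in>S. \<forall>i'\<in>S. i' < i \<longrightarrow> f i S \<le> p * f i' S"
    using assms(5) unfolding sep_ranking_def by auto
  have dsK: "\<And>S. S \<in> display_sets K \<Longrightarrow> S \<subseteq> {1..K}" unfolding display_sets_def by auto
  define D where "D = Sigma (display_sets K) (\<lambda>S. S)"
  have finds: "finite (display_sets K)"
    unfolding display_sets_def by (rule finite_subset[of _ "Pow {1..K}"]) auto
  have finD: "finite D" unfolding D_def
    by (rule finite_SigmaI[OF finds]) (meson dsK finite_atLeastAtMost finite_subset)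
  have "{1, 2} \<in> display_sets K" unfolding display_sets_def using K3 by auto
  then have neD: "D \<noteq> {}" unfolding D_def by auto
  define c where "c = Min ((\<lambda>(S, i). f i S) ` D)"
  have cle: "\<And>S i. S \<in> display_sets K \<Longrightarrow> i \<in> S \<Longrightarrow> c \<le> f i S"
    unfolding c_def D_def using finD D_def by (intro Min_le) auto
  have c0: "0 < c"
  proof -
    have "c \<in> (\<lambda>(S, i). f i S) ` D" unfolding c_def using finD neD by (intro Min_in) auto
    then obtain S i where "S \<in> display_sets K" "i \<in> S" "c = f i S" unfolding D_def by auto
    then show ?thesis using pos dsK by blast
  qed
  define x where "x = (1 + p) / 2"
  have x: "0 < x" "x < 1" "p < x" unfolding x_def using p0 p1 by auto
  define \<delta> where "\<delta> = (1 - x) * (1 - p / x)"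
  have "p / x < 1" using x by simp
  then have \<delta>0: "0 < \<delta>" unfolding \<delta>_def using x by (intro mult_pos_pos) auto
  define \<rho> where "\<rho> = max (1/2) (1 - c * \<delta>)"
  have \<rho>: "0 < \<rho>" "\<rho> < 1" unfolding \<rho>_def using c0 \<delta>0 by auto
  have stepb: "\<forall>A\<in>display_sets K. \<forall>j\<in>A. \<forall>n\<in>A. j < n \<longrightarrow>
                  1 - f j A * (1 - x) + f n A * (1 / x - 1) \<le> \<rho>"
  proof (intro ballI impI)
    fix A j n assume A: "A \<in> display_sets K" and jA: "j \<in> A" and nA: "n \<in> A" and jn: "j < n"
    have b: "f n A \<le> p * f j A" using sep A jA nA jn by blast
    have a: "c \<le> f j A" using cle A jA by blast
    have x1: "0 \<le> 1 / x - 1" using x by simp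
    have "f n A * (1 / x - 1) \<le> p * f j A * (1 / x - 1)" using b x1 by (rule mult_right_mono)
    moreover have "1 - f j A * (1 - x) + p * f j A * (1 / x - 1) = 1 - f j A * \<delta>"
      unfolding \<delta>_def using x by (simp add: field_simps)
    moreover have "f j A * \<delta> \<ge> c * \<delta>" using a \<delta>0 by (simp add: mult_right_mono)
    ultimately show "1 - f j A * (1 - x) + f n A * (1 / x - 1) \<le> \<rho>" unfolding \<rho>_def by linarith
  qed
  show ?thesis
  proof (intro exI[of _ \<rho>] conjI allI impI ballI)
    show "0 < \<rho>" "\<rho> < 1" using \<rho> by auto
    fix M :: nat and tb and r and T
    assume M: "0 < M" and tb: "valid_tiebreak tb" and r: "r \<in> {2..K-1}"
    let ?P = "ne_run K f M tb T"
    define n where "n = K - r + 2"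
    define E where "E a = {s :: ne_state. prec a n (snd (snd (snd s)))}" for a
    have sub: "{s. bad_event K r (snd (snd (snd s)))} \<inter> set_pmf ?P \<subseteq> (\<Union>a\<in>{1..K-r+1}. E a)"
    proof
      fix s assume s: "s \<in> {s. bad_event K r (snd (snd (snd s)))} \<inter> set_pmf ?P"
      obtain h W A el where e: "s = (h, W, A, el)" by (cases s) auto
      have "Inv K s" using s Inv_run[OF tb] by blast
      then have "distinct el" "set el \<subseteq> {1..K}" unfolding Inv_def e by auto
      moreover have "bad_event K r el" using s e by simp
      ultimately obtain a where "a \<in> {1..K-r+1}" "prec a (K-r+2) el"
        using bad_prec[OF r K3] by blast
      then show "s \<in> (\<Union>a\<in>{1..K-r+1}. E a)" unfolding E_def n_def e by auto
    qed
    have "measure_pmf.prob ?P {s. bad_event K r (snd (snd (snd s)))}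
        = measure_pmf.prob ?P ({s. bad_event K r (snd (snd (snd s)))} \<inter> set_pmf ?P)"
      by (simp add: measure_Int_set_pmf)
    also have "\<dots> \<le> measure_pmf.prob ?P (\<Union>a\<in>{1..K-r+1}. E a)"
      by (rule measure_pmf.finite_measure_mono[OF sub]) simp
    also have "\<dots> \<le> (\<Sum>a\<in>{1..K-r+1}. measure_pmf.prob ?P (E a))"
      by (rule measure_pmf.finite_measure_subadditive_finite) auto
    also have "\<dots> \<le> (\<Sum>a\<in>{1..K-r+1}. \<rho> ^ M)"
    proof (rule sum_mono)
      fix a assume a: "a \<in> {1..K-r+1}"
      have jn: "a \<in> {1..K}" "n \<in> {1..K}" "a < n" using a r unfolding n_def by auto
      show "measure_pmf.prob ?P (E a) \<le> \<rho> ^ M" unfolding E_def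
        by (rule prob_prec_le[OF tb jn _ _ _ _ sum1 pos stepb]) (use x \<rho> in auto)
    qed
    also have "\<dots> = real (K - r + 1) * \<rho> ^ M" by simp
    finally show "measure_pmf.prob ?P {s. bad_event K r (snd (snd (snd s)))} \<le> real (K - r + 1) * \<rho> ^ M" .
  qed
qed

end
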